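(* Let $T$ be a bounded, linear, positive operator on $L^2(G,\mathbb{C}^{s\times r})$ that is adjointable with respect to the matrix-valued inner product, and let $\{E_k\}_{k\in\mathbb{N}}$ be a matrix-valued orthonormal basis for $L^2(G,\mathbb{C}^{s\times r})$. Then for every $n\in\mathbb{N}$, $\{(I+T+T^2+\cdots+T^n)E_k\}_{k\in\mathbb{N}}$ is a matrix-valued Riesz basis for $L^2(G,\mathbb{C}^{s\times r})$, where $I$ is the identity operator.
   Context: $G$ is a locally compact abelian group that is metrizable and $\sigma$-compact, with Haar measure $\mu_G$; $s,r\in\mathbb{N}$. $L^2(G,\mathbb{C}^{s\times r})$ is the space of $s\times r$ matrices $\mathbf{f}=[f_{ij}]$ with all entries in $L^2(G)$. The matrix-valued inner product is $\langle \mathbf{f},\mathbf{g}\rangle=\int_G \mathbf{f}(x)\mathbf{g}^*(x)\,d\mu_G\in M_s(\mathbb{C})$ (entrywise integral). $L^2(G,\mathbb{C}^{s\times r})$ is a Hilbert space with inner product $\langle \mathbf{f},\mathbf{g}\rangle_{L^2}=\mathrm{tr}\langle \mathbf{f},\mathbf{g}\rangle$ and Frobenius norm $\|\mathbf{f}\|=(\sum_{i,j}\int_G|f_{ij}|^2d\mu_G)^{1/2}$; $U^*$ denotes the Hilbert-adjoint with respect to this inner product. $U$ is adjointable with respect to the matrix-valued inner product if $\langle U\mathbf{f},\mathbf{g}\rangle=\langle\mathbf{f},U^*\mathbf{g}\rangle$ for all $\mathbf{f},\mathbf{g}$. A bounded operator $T$ is positive if $T^*=T$ and $\mathrm{tr}\langle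 T\mathbf{f},\mathbf{f}\rangle\ge0$ for all $\mathbf{f}$. A matrix-valued orthonormal basis is a sequence $\{E_k\}_{k\in\mathbb{N}}$ with $\langle E_k,E_j\rangle=\mathbf{I}_{s\times s}$ if $k=j$ and $\mathbf{O}_{s\times s}$ otherwise, such that $\mathbf{f}=\sum_k\langle\mathbf{f},E_k\rangle E_k$ in Frobenius norm for all $\mathbf{f}$. A matrix-valued Riesz basis is a family $\{UE_k\}_{k\in\mathbb{N}}$ with $\{E_k\}$ a matrix-valued orthonormal basis and $U$ bounded, linear, bijective and adjointable with respect to the matrix-valued inner product. *)

theory Defs
  imports "HOL-Analysis.Analysis"
begin

text \<open>G is a locally compact abelian group, metrizable (its topology comes from a metric,
  modelled by the metric_space type class) and sigma-compact.\<close>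

definition lca_metrizable_sigma_compact :: "'g::{ab_group_add, metric_space} itself \<Rightarrow> bool" where
  "lca_metrizable_sigma_compact _ \<longleftrightarrow>
     continuous_on UNIV (\<lambda>p::'g \<times> 'g. fst p + snd p) \<and>
     continuous_on UNIV (\<lambda>x::'g. - x) \<and>
     locally_compact_space (euclidean :: 'g topology) \<and>
     (\<exists>K :: nat \<Rightarrow> 'g set. (\<forall>n. compact (K n)) \<and> (\<Union>n. K n) = UNIV)"

definition haar_measure :: "'g::{ab_group_add, metric_space} measure \<Rightarrow> bool" where
  "haar_measure M \<longleftrightarrow>
     sets M = sets borel \<and> space M = UNIV \<and>
     (\<forall>a A. A \<in> sets M \<longrightarrow> emeasure M ((\<lambda>x. a + x) ` A) = emeasure M A) \<and>
     (\<forall>K. compact K \<longrightarrow> emeasure M K < \<infinity>) \<and>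
     (\<forall>U. open U \<and> U \<noteq> {} \<longrightarrow> 0 < emeasure M U) \<and>
     (\<forall>A \<in> sets M. emeasure M A = (INF U \<in> {U. open U \<and> A \<subseteq> U}. emeasure M U)) \<and>
     (\<forall>U. open U \<longrightarrow> emeasure M U = (SUP K \<in> {K. compact K \<and> K \<subseteq> U}. emeasure M K))"

text \<open>Elements are functions G -> complex s x r matrices (type complex^'r^'s), all of whose
  entries are square integrable; elements are identified up to equality almost everywhere.\<close>

definition L2M :: "'g measure \<Rightarrow> ('g \<Rightarrow> complex^'r^'s) set" where
  "L2M M = {f. \<forall>i j. (\<lambda>x. f x $ i $ j) \<in> borel_measurable M \<and>
                    integrable M (\<lambda>x. (cmod (f x $ i $ j))^2)}"

definition aeq :: "'g measure \<Rightarrow> ('g \<Rightarrow> 'b) \<Rightarrow> ('g \<Rightarrow> 'b) \<Rightarrow> bool" where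
  "aeq M f g \<longleftrightarrow> (AE x in M. f x = g x)"

definition cadj :: "complex^'r^'s \<Rightarrow> complex^'s^'r" where
  "cadj A = (\<chi> i j. cnj (A $ j $ i))"

definition cscale :: "complex \<Rightarrow> complex^'r^'s \<Rightarrow> complex^'r^'s" where
  "cscale a A = (\<chi> i j. a * A $ i $ j)"

definition mip :: "'g measure \<Rightarrow> ('g \<Rightarrow> complex^'r^'s) \<Rightarrow> ('g \<Rightarrow> complex^'r^'s) \<Rightarrow> complex^'s^'s" where
  "mip M f g = (\<chi> i k. LINT x|M. (f x ** cadj (g x)) $ i $ k)"

definition hip :: "'g measure \<Rightarrow> ('g \<Rightarrow> complex^'r^'s) \<Rightarrow> ('g \<Rightarrow> complex^'r^'s) \<Rightarrow> complex" where
  "hip M f g = trace (mip M f g)"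

definition fnorm :: "'g measure \<Rightarrow> ('g \<Rightarrow> complex^'r^'s) \<Rightarrow> real" where
  "fnorm M f = sqrt (\<Sum>i\<in>UNIV. \<Sum>j\<in>UNIV. LINT x|M. (cmod (f x $ i $ j))^2)"

text \<open>An operator is represented by a map on representatives which maps L^2 into L^2 and
  respects equality almost everywhere (so it is a map on the equivalence classes).\<close>
definition op_on :: "'g measure \<Rightarrow> (('g \<Rightarrow> complex^'r^'s) \<Rightarrow> ('g \<Rightarrow> complex^'r^'s)) \<Rightarrow> bool" where
  "op_on M U \<longleftrightarrow> (\<forall>f \<in> L2M M. U f \<in> L2M M) \<and>
     (\<forall>f \<in> L2M M. \<forall>g \<in> L2M M. aeq M f g \<longrightarrow> aeq M (U f) (U g))"

definition op_linear :: "'g measure \<Rightarrow> (('g \<Rightarrow> complex^'r^'s) \<Rightarrow> ('g \<Rightarrow> complex^'r^'s)) \<Rightarrow> bool" where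
  "op_linear M U \<longleftrightarrow> (\<forall>a f g. f \<in> L2M M \<longrightarrow> g \<in> L2M M \<longrightarrow>
      aeq M (U (\<lambda>x. cscale a (f x) + g x)) (\<lambda>x. cscale a (U f x) + U g x))"

definition op_bounded :: "'g measure \<Rightarrow> (('g \<Rightarrow> complex^'r^'s) \<Rightarrow> ('g \<Rightarrow> complex^'r^'s)) \<Rightarrow> bool" where
  "op_bounded M U \<longleftrightarrow> (\<exists>C. \<forall>f \<in> L2M M. fnorm M (U f) \<le> C * fnorm M f)"

definition op_bij :: "'g measure \<Rightarrow> (('g \<Rightarrow> complex^'r^'s) \<Rightarrow> ('g \<Rightarrow> complex^'r^'s)) \<Rightarrow> bool" where
  "op_bij M U \<longleftrightarrow>
     (\<forall>f \<in> L2M M. \<forall>g \<in> L2M M. aeq M (U f) (U g) \<longrightarrow> aeq M f g) \<and>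
     (\<forall>g \<in> L2M M. \<exists>f \<in> L2M M. aeq M (U f) g)"

definition op_adjointable :: "'g measure \<Rightarrow> (('g \<Rightarrow> complex^'r^'s) \<Rightarrow> ('g \<Rightarrow> complex^'r^'s)) \<Rightarrow> bool" where
  "op_adjointable M U \<longleftrightarrow> (\<exists>V. op_on M V \<and>
     (\<forall>f \<in> L2M M. \<forall>g \<in> L2M M. mip M (U f) g = mip M f (V g)))"

definition op_positive :: "'g measure \<Rightarrow> (('g \<Rightarrow> complex^'r^'s) \<Rightarrow> ('g \<Rightarrow> complex^'r^'s)) \<Rightarrow> bool" where
  "op_positive M T \<longleftrightarrow>
     (\<forall>f \<in> L2M M. \<forall>g \<in> L2M M. hip M (T f) g = hip M f (T g)) \<and>
     (\<forall>f \<in> L2M M. Im (hip M (T f) f) = 0 \<and> 0 \<le> Re (hip M (T f) f))"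

definition mv_onb :: "'g measure \<Rightarrow> (nat \<Rightarrow> ('g \<Rightarrow> complex^'r^'s)) \<Rightarrow> bool" where
  "mv_onb M E \<longleftrightarrow> (\<forall>k. E k \<in> L2M M) \<and>
     (\<forall>k j. mip M (E k) (E j) = (if k = j then mat 1 else 0)) \<and>
     (\<forall>f \<in> L2M M. (\<lambda>n. fnorm M (\<lambda>x. f x - (\<Sum>k<n. mip M f (E k) ** E k x))) \<longlonglongrightarrow> 0)"

definition mv_riesz_basis :: "'g measure \<Rightarrow> (nat \<Rightarrow> ('g \<Rightarrow> complex^'r^'s)) \<Rightarrow> bool" where
  "mv_riesz_basis M F \<longleftrightarrow> (\<exists>E U. mv_onb M E \<and> op_on M U \<and> op_linear M U \<and>
     op_bounded M U \<and> op_bij M U \<and> op_adjointable M U \<and> (\<forall>k. aeq M (F k) (U (E k))))"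

end

theory Submission
  imports Defs
begin

lemma vec_meas_iff:
  fixes f :: "'g \<Rightarrow> complex^'r^'s"
  shows "f \<in> borel_measurable M \<longleftrightarrow> (\<forall>i j. (\<lambda>x. f x $ i $ j) \<in> borel_measurable M)"
proof
  assume f: "f \<in> borel_measurable M"
  show "\<forall>i j. (\<lambda>x. f x $ i $ j) \<in> borel_measurable M"
  proof (intro allI)
    fix i j
    have "continuous_on UNIV (\<lambda>A::complex^'r^'s. A $ i $ j)"
      by (intro continuous_intros)
    from measurable_compose[OF f borel_measurable_continuous_onI[OF this]]
    show "(\<lambda>x. f x $ i $ j) \<in> borel_measurable M" .
  qed
next
  assume h: "\<forall>i j. (\<lambda>x. f x $ i $ j) \<in> borel_measurable M"
  show "f \<in> borel_measurable M"
  proof (rule borel_measurable_euclidean_space[THEN iffD2], rule ballI)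
    fix b :: "complex^'r^'s" assume "b \<in> Basis"
    then obtain i c where c: "c \<in> Basis" "b = axis i c" unfolding Basis_vec_def by auto
    then obtain j d where d: "d \<in> (Basis::complex set)" "c = axis j d" unfolding Basis_vec_def by auto
    have m: "(\<lambda>x. f x $ i $ j) \<in> borel_measurable M"
      using h by blast
    have "(\<lambda>x. inner (f x $ i $ j) d) \<in> borel_measurable M"
      using borel_measurable_inner[OF m measurable_const] by simp
    moreover have "inner (f x) b = inner (f x $ i $ j) d" for x
      using c d by (simp add: inner_axis)
    ultimately show "(\<lambda>x. inner (f x) b) \<in> borel_measurable M"
      by simp
  qed
qed

lemma norm_sq_mat: "(norm (A::complex^'r^'s))^2 = (\<Sum>i\<in>UNIV. \<Sum>j\<in>UNIV. (cmod (A$i$j))^2)"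
proof -
  have "(norm A)^2 = (\<Sum>i\<in>UNIV. (norm (A$i))^2)"
    unfolding norm_vec_def L2_set_def by (simp add: sum_nonneg)
  also have "\<dots> = (\<Sum>i\<in>UNIV. \<Sum>j\<in>UNIV. (cmod (A$i$j))^2)"
    unfolding norm_vec_def L2_set_def by (simp add: sum_nonneg)
  finally show ?thesis .
qed

lemma cmod_le_norm_mat: "cmod (A $ i $ j) \<le> norm (A::complex^'r^'s)"
proof -
  have "cmod (A$i$j) \<le> norm (A$i)" by (rule Finite_Cartesian_Product.norm_nth_le)
  also have "\<dots> \<le> norm A" by (rule Finite_Cartesian_Product.norm_nth_le)
  finally show ?thesis .
qed

lemma L2M_iff:
  "f \<in> L2M M \<longleftrightarrow> f \<in> borel_measurable M \<and> integrable M (\<lambda>x. (norm (f x))^2)"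
proof
  assume f: "f \<in> L2M M"
  then have m: "\<forall>i j. (\<lambda>x. f x $ i $ j) \<in> borel_measurable M"
    and i: "\<And>i j. integrable M (\<lambda>x. (cmod (f x $ i $ j))^2)"
    unfolding L2M_def by auto
  have "integrable M (\<lambda>x. \<Sum>i\<in>UNIV. \<Sum>j\<in>UNIV. (cmod (f x $i$j))^2)"
    using i by (intro Bochner_Integration.integrable_sum) auto
  moreover have "f \<in> borel_measurable M" using m by (simp add: vec_meas_iff)
  ultimately show "f \<in> borel_measurable M \<and> integrable M (\<lambda>x. (norm (f x))^2)"
    by (simp add: norm_sq_mat)
next
  assume f: "f \<in> borel_measurable M \<and> integrable M (\<lambda>x. (norm (f x))^2)"
  then have m: "\<forall>i j. (\<lambda>x. f x $ i $ j) \<in> borel_measurable M"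
    by (simp add: vec_meas_iff)
  have "integrable M (\<lambda>x. (cmod (f x $ i $ j))^2)" for i j
  proof (rule Bochner_Integration.integrable_bound)
    show "integrable M (\<lambda>x. (norm (f x))^2)" using f by blast
    have "(\<lambda>x. f x $ i $ j) \<in> borel_measurable M" using m by blast
    then show "(\<lambda>x. (cmod (f x $ i $ j))^2) \<in> borel_measurable M" by measurable
    show "AE x in M. norm ((cmod (f x $ i $ j))^2) \<le> norm ((norm (f x))^2)"
      by (auto intro!: power_mono cmod_le_norm_mat)
  qed
  then show "f \<in> L2M M" using m unfolding L2M_def by auto
qed

lemma L2M_meas: "f \<in> L2M M \<Longrightarrow> f \<in> borel_measurable M"
  by (simp add: L2M_iff)

lemma L2M_int: "f \<in> L2M M \<Longrightarrow> integrable M (\<lambda>x. (norm (f x))^2)"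
  by (simp add: L2M_iff)

lemma fnorm_eq: "f \<in> L2M M \<Longrightarrow> fnorm M f = sqrt (LINT x|M. (norm (f x))^2)"
proof -
  assume f: "f \<in> L2M M"
  then have i: "\<And>i j. integrable M (\<lambda>x. (cmod (f x $ i $ j))^2)"
    unfolding L2M_def by auto
  have "(LINT x|M. (norm (f x))^2) = (LINT x|M. (\<Sum>i\<in>UNIV. \<Sum>j\<in>UNIV. (cmod (f x $i$j))^2))"
    by (simp add: norm_sq_mat)
  also have "\<dots> = (\<Sum>i\<in>UNIV. LINT x|M. (\<Sum>j\<in>UNIV. (cmod (f x $i$j))^2))"
    using i by (intro Bochner_Integration.integral_sum) auto
  also have "\<dots> = (\<Sum>i\<in>UNIV. \<Sum>j\<in>UNIV. LINT x|M. (cmod (f x $i$j))^2)"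
    using i by (intro sum.cong refl Bochner_Integration.integral_sum) auto
  finally show ?thesis unfolding fnorm_def by simp
qed

lemma sq_add_le: "(norm (a + b :: 'a::real_normed_vector))^2 \<le> 2 * (norm a)^2 + 2 * (norm b)^2"
proof -
  have "norm (a+b) \<le> norm a + norm b" by (rule norm_triangle_ineq)
  then have "(norm (a+b))^2 \<le> (norm a + norm b)^2"
    by (simp add: power_mono)
  also have "\<dots> \<le> 2 * (norm a)^2 + 2 * (norm b)^2"
    using sum_squares_bound[of "norm a" "norm b"] by (simp add: power2_sum)
  finally show ?thesis .
qed

lemma L2M_add: "f \<in> L2M M \<Longrightarrow> g \<in> L2M M \<Longrightarrow> (\<lambda>x. f x + g x) \<in> L2M M"
  unfolding L2M_iff
proof (intro conjI)
  assume f: "f \<in> borel_measurable M \<and> integrable M (\<lambda>x. (norm (f x))\<^sup>2)"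
    and g: "g \<in> borel_measurable M \<and> integrable M (\<lambda>x. (norm (g x))\<^sup>2)"
  then show m: "(\<lambda>x. f x + g x) \<in> borel_measurable M" by auto
  show "integrable M (\<lambda>x. (norm (f x + g x))\<^sup>2)"
  proof (rule Bochner_Integration.integrable_bound)
    show "integrable M (\<lambda>x. 2 * (norm (f x))^2 + 2 * (norm (g x))^2)" using f g by auto
    show "(\<lambda>x. (norm (f x + g x))\<^sup>2) \<in> borel_measurable M" using m by measurable
    show "AE x in M. norm ((norm (f x + g x))\<^sup>2) \<le> norm (2 * (norm (f x))^2 + 2 * (norm (g x))^2)"
      using sq_add_le by (auto simp: abs_of_nonneg)
  qed
qed

lemma norm_cscale: "norm (cscale a (A::complex^'r^'s)) = cmod a * norm A"
proof -
  have "(norm (cscale a A))^2 = (cmod a * norm A)^2"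
    by (simp add: norm_sq_mat cscale_def power_mult_distrib norm_mult sum_distrib_left)
  then show ?thesis
    by (simp add: power2_eq_iff_nonneg)
qed

lemma cscale_of_real: "cscale (complex_of_real t) A = t *\<^sub>R A"
  by (simp add: cscale_def vec_eq_iff) (simp add: scaleR_conv_of_real)

lemma L2M_cscale: "f \<in> L2M M \<Longrightarrow> (\<lambda>x. cscale a (f x)) \<in> L2M M"
  unfolding L2M_iff
proof (intro conjI)
  assume f: "f \<in> borel_measurable M \<and> integrable M (\<lambda>x. (norm (f x))\<^sup>2)"
  then have "\<forall>i j. (\<lambda>x. f x $ i $ j) \<in> borel_measurable M" using vec_meas_iff by blast
  then have "\<forall>i j. (\<lambda>x. cscale a (f x) $ i $ j) \<in> borel_measurable M"
    by (auto simp: cscale_def intro!: borel_measurable_times)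
  then show "(\<lambda>x. cscale a (f x)) \<in> borel_measurable M" using vec_meas_iff by blast
  show "integrable M (\<lambda>x. (norm (cscale a (f x)))\<^sup>2)"
    using f by (simp add: norm_cscale power_mult_distrib)
qed

lemma L2M_zero: "(\<lambda>x. 0) \<in> L2M M"
  unfolding L2M_iff by simp

lemma L2M_scaleR: "f \<in> L2M M \<Longrightarrow> (\<lambda>x. t *\<^sub>R f x) \<in> L2M M"
  using L2M_cscale[of f M "complex_of_real t"] by (simp add: cscale_of_real)

lemma L2M_uminus: "f \<in> L2M M \<Longrightarrow> (\<lambda>x. - f x) \<in> L2M M"
  using L2M_scaleR[of f M "-1"] by simp

lemma L2M_diff: "f \<in> L2M M \<Longrightarrow> g \<in> L2M M \<Longrightarrow> (\<lambda>x. f x - g x) \<in> L2M M"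
  using L2M_add[of f M "\<lambda>x. - g x"] L2M_uminus[of g M] by simp

lemma L2M_sum: "(\<And>i. i \<in> I \<Longrightarrow> h i \<in> L2M M) \<Longrightarrow> (\<lambda>x. \<Sum>i\<in>I. h i x) \<in> L2M M"
proof (induction I rule: infinite_finite_induct)
  case (infinite A) then show ?case by (simp add: L2M_zero)
next
  case empty then show ?case by (simp add: L2M_zero)
next
  case (insert a F) then show ?case
    using L2M_add[of "h a" M "\<lambda>x. \<Sum>i\<in>F. h i x"] by simp
qed

lemma L2M_lin: "f \<in> L2M M \<Longrightarrow> g \<in> L2M M \<Longrightarrow> (\<lambda>x. cscale a (f x) + g x) \<in> L2M M"
  using L2M_add L2M_cscale by blast

definition rip :: "'g measure \<Rightarrow> ('g \<Rightarrow> complex^'r^'s) \<Rightarrow> ('g \<Rightarrow> complex^'r^'s) \<Rightarrow> real" where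
  "rip M f g = (integral\<^sup>L M (\<lambda>x. inner (f x) (g x)))"

lemma amgm_t: "t > 0 \<Longrightarrow> (a::real) * b \<le> (t * a^2 + b^2 / t) / 2"
proof -
  assume t: "t > 0"
  have h: "2 * (t*a) * b \<le> (t*a)^2 + b^2" by (rule sum_squares_bound)
  have "a*b = (2*(t*a)*b)/(2*t)" using t by (simp add: field_simps)
  also have "\<dots> \<le> ((t*a)^2 + b^2)/(2*t)" using h t by (intro divide_right_mono) auto
  also have "\<dots> = (t*a^2 + b^2/t)/2" using t by (simp add: field_simps power2_eq_square)
  finally show ?thesis .
qed

lemma inner_le_sq: "t > 0 \<Longrightarrow> \<bar>inner (a::'a::real_inner) b\<bar> \<le> (t * (norm a)^2 + (norm b)^2 / t) / 2"
  using Cauchy_Schwarz_ineq2[of a b] amgm_t[of t "norm a" "norm b"] by linarith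

lemma int_inner: "f \<in> L2M M \<Longrightarrow> g \<in> L2M M \<Longrightarrow> integrable M (\<lambda>x. inner (f x) (g x))"
proof (rule Bochner_Integration.integrable_bound)
  assume f: "f \<in> L2M M" and g: "g \<in> L2M M"
  show "integrable M (\<lambda>x. (1 * (norm (f x))^2 + (norm (g x))^2 / 1) / 2)"
    using f g by (auto simp: L2M_iff)
  show "(\<lambda>x. inner (f x) (g x)) \<in> borel_measurable M"
    using f g by (auto simp: L2M_iff)
  show "AE x in M. norm (inner (f x) (g x)) \<le> norm ((1 * (norm (f x))^2 + (norm (g x))^2 / 1) / 2)"
    using inner_le_sq[of 1] by auto
qed

lemma fnorm_nonneg: "f \<in> L2M M \<Longrightarrow> 0 \<le> fnorm M f"
  by (simp add: fnorm_eq)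

lemma fnorm_sq: "f \<in> L2M M \<Longrightarrow> (fnorm M f)^2 = (integral\<^sup>L M (\<lambda>x. (norm (f x))^2))"
  by (simp add: fnorm_eq)

lemma rip_self: "f \<in> L2M M \<Longrightarrow> rip M f f = (fnorm M f)^2"
  by (simp add: fnorm_sq rip_def power2_norm_eq_inner)

lemma rip_sym: "rip M f g = rip M g f"
  by (simp add: rip_def inner_commute)

lemma sqrt_bound_lemma:
  fixes X F G :: real
  assumes F: "F \<ge> 0" and G: "G \<ge> 0" and h: "\<And>t. t > 0 \<Longrightarrow> X \<le> (t * F + G / t) / 2"
  shows "X \<le> sqrt F * sqrt G"
proof (cases "F > 0 \<and> G > 0")
  case True
  define t where "t = sqrt G / sqrt F"
  have t: "t > 0" using True by (simp add: t_def)
  have sF: "F = sqrt F * sqrt F" and sG: "G = sqrt G * sqrt G" using F G by simp_all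
  have nz: "sqrt F \<noteq> 0" "sqrt G \<noteq> 0" using True by auto
  have "t * F = sqrt F * sqrt G"
    unfolding t_def by (subst sF) (use nz in \<open>simp add: field_simps\<close>)
  moreover have "G / t = sqrt F * sqrt G"
    unfolding t_def by (subst sG) (use nz in \<open>simp add: field_simps\<close>)
  ultimately show ?thesis using h[OF t] by simp
next
  case False
  then have "F = 0 \<or> G = 0" using F G by auto
  show ?thesis
  proof (rule ccontr)
    assume "\<not> X \<le> sqrt F * sqrt G"
    then have X: "X > 0" using \<open>F = 0 \<or> G = 0\<close> by auto
    show False
    proof (cases "F = 0")
      case True
      define t where "t = G / X + 1"
      have t: "t > 0" using divide_nonneg_pos[OF G X] unfolding t_def by linarith
      have "X \<le> (G / t) / 2" using h[OF t] True by simp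
      moreover have "G / t < 2 * X"
      proof -
        have "2 * X * t = 2 * G + 2 * X" using X by (simp add: t_def field_simps)
        then have "G < 2 * X * t" using X G by linarith
        then show ?thesis using t by (simp add: field_simps)
      qed
      ultimately show False
      proof -
        assume a1: "X \<le> (G / t) / 2" and a2: "G / t < 2 * X"
        from a1 a2 show False by (simp add: field_simps)
      qed
    next
      case False
      then have G0: "G = 0" and Fp: "F > 0" using \<open>F = 0 \<or> G = 0\<close> F by auto
      define t where "t = X / F"
      have t: "t > 0" using X Fp by (simp add: t_def)
      have "X \<le> t * F / 2" using h[OF t] G0 by simp
      then show False using X Fp by (simp add: t_def)
    qed
  qed
qed

lemma rip_CS: "f \<in> L2M M \<Longrightarrow> g \<in> L2M M \<Longrightarrow> \<bar>rip M f g\<bar> \<le> fnorm M f * fnorm M g"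
proof -
  assume f: "f \<in> L2M M" and g: "g \<in> L2M M"
  have If: "integrable M (\<lambda>x. (norm (f x))^2)" and Ig: "integrable M (\<lambda>x. (norm (g x))^2)"
    using f g by (auto simp: L2M_iff)
  have "\<bar>rip M f g\<bar> \<le> sqrt (integral\<^sup>L M (\<lambda>x. (norm (f x))^2)) * sqrt (integral\<^sup>L M (\<lambda>x. (norm (g x))^2))"
  proof (rule sqrt_bound_lemma)
    show "0 \<le> (integral\<^sup>L M (\<lambda>x. (norm (f x))^2))" "0 \<le> (integral\<^sup>L M (\<lambda>x. (norm (g x))^2))"
      by (auto intro!: integral_nonneg_AE)
    fix t :: real assume t: "t > 0"
    have i1: "integrable M (\<lambda>x. inner (f x) (g x))" by (rule int_inner[OF f g])
    have i2: "integrable M (\<lambda>x. (t * (norm (f x))^2 + (norm (g x))^2 / t) / 2)"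
      using If Ig by (intro Bochner_Integration.integrable_divide Bochner_Integration.integrable_add Bochner_Integration.integrable_mult_right)
    have "\<bar>rip M f g\<bar> \<le> (integral\<^sup>L M (\<lambda>x. \<bar>inner (f x) (g x)\<bar>))"
      unfolding rip_def by (rule integral_abs_bound)
    also have "\<dots> \<le> (integral\<^sup>L M (\<lambda>x. (t * (norm (f x))^2 + (norm (g x))^2 / t) / 2))"
      by (rule Bochner_Integration.integral_mono[OF integrable_abs[OF i1] i2]) (rule inner_le_sq[OF t])
    also have "\<dots> = (t * (integral\<^sup>L M (\<lambda>x. (norm (f x))^2)) + (integral\<^sup>L M (\<lambda>x. (norm (g x))^2)) / t) / 2"
      using If Ig by (simp add: Bochner_Integration.integral_add)
    finally show "\<bar>rip M f g\<bar> \<le> (t * (integral\<^sup>L M (\<lambda>x. (norm (f x))^2)) + (integral\<^sup>L M (\<lambda>x. (norm (g x))^2)) / t) / 2" .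
  qed
  then show ?thesis using f g by (simp add: fnorm_eq)
qed

lemma rip_add_left: "f \<in> L2M M \<Longrightarrow> g \<in> L2M M \<Longrightarrow> h \<in> L2M M \<Longrightarrow>
   rip M (\<lambda>x. f x + g x) h = rip M f h + rip M g h"
  unfolding rip_def inner_add_left
  by (rule Bochner_Integration.integral_add[OF int_inner int_inner])

lemma rip_scaleR_left: "rip M (\<lambda>x. t *\<^sub>R f x) h = t * rip M f h"
  unfolding rip_def by simp

lemma rip_add_right: "f \<in> L2M M \<Longrightarrow> g \<in> L2M M \<Longrightarrow> h \<in> L2M M \<Longrightarrow>
   rip M h (\<lambda>x. f x + g x) = rip M h f + rip M h g"
  using rip_add_left[of f M g h] rip_sym by metis

lemma fnorm_add_le: "f \<in> L2M M \<Longrightarrow> g \<in> L2M M \<Longrightarrow>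
    fnorm M (\<lambda>x. f x + g x) \<le> fnorm M f + fnorm M g"
proof -
  assume f: "f \<in> L2M M" and g: "g \<in> L2M M"
  have fg: "(\<lambda>x. f x + g x) \<in> L2M M" using L2M_add f g by blast
  have e1: "rip M (\<lambda>x. f x + g x) (\<lambda>x. f x + g x) = rip M f (\<lambda>x. f x + g x) + rip M g (\<lambda>x. f x + g x)"
    by (rule rip_add_left[OF f g fg])
  have e2: "rip M f (\<lambda>x. f x + g x) = rip M f f + rip M f g"
    by (rule rip_add_right[OF f g f])
  have e3: "rip M g (\<lambda>x. f x + g x) = rip M g f + rip M g g"
    by (rule rip_add_right[OF f g g])
  have "(fnorm M (\<lambda>x. f x + g x))^2 = rip M (\<lambda>x. f x + g x) (\<lambda>x. f x + g x)"
    using rip_self[OF fg] by simp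
  also have "\<dots> = (fnorm M f)^2 + 2 * rip M f g + (fnorm M g)^2"
    unfolding e1 e2 e3 rip_self[OF f] rip_self[OF g] rip_sym[of M g f] by simp
  also have "\<dots> \<le> (fnorm M f)^2 + 2 * (fnorm M f * fnorm M g) + (fnorm M g)^2"
    using rip_CS[OF f g] by simp
  also have "\<dots> = (fnorm M f + fnorm M g)^2"
    by (simp add: power2_sum)
  finally have "(fnorm M (\<lambda>x. f x + g x))^2 \<le> (fnorm M f + fnorm M g)^2" .
  moreover have "0 \<le> fnorm M f + fnorm M g" using fnorm_nonneg[OF f] fnorm_nonneg[OF g] by simp
  ultimately show ?thesis by (rule power2_le_imp_le)
qed

lemma fnorm_scaleR: "f \<in> L2M M \<Longrightarrow> fnorm M (\<lambda>x. t *\<^sub>R f x) = \<bar>t\<bar> * fnorm M f"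
  using L2M_scaleR[of f M t]
  by (simp add: fnorm_eq power_mult_distrib real_sqrt_mult)

lemma fnorm_uminus: "f \<in> L2M M \<Longrightarrow> fnorm M (\<lambda>x. - f x) = fnorm M f"
  using L2M_uminus[of f M] by (simp add: fnorm_eq)

lemma fnorm_diff_le: "f \<in> L2M M \<Longrightarrow> g \<in> L2M M \<Longrightarrow>
    fnorm M (\<lambda>x. f x - g x) \<le> fnorm M f + fnorm M g"
  using fnorm_add_le[of f M "\<lambda>x. - g x"] L2M_uminus[of g M] fnorm_uminus[of g M] by simp

lemma fnorm_diff_commute: "f \<in> L2M M \<Longrightarrow> g \<in> L2M M \<Longrightarrow>
    fnorm M (\<lambda>x. f x - g x) = fnorm M (\<lambda>x. g x - f x)"
  using L2M_diff[of f M g] L2M_diff[of g M f] by (simp add: fnorm_eq norm_minus_commute)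

lemma fnorm_cong: "f \<in> L2M M \<Longrightarrow> g \<in> L2M M \<Longrightarrow> aeq M f g \<Longrightarrow> fnorm M f = fnorm M g"
proof -
  assume f: "f \<in> L2M M" and g: "g \<in> L2M M" and a: "aeq M f g"
  have "(integral\<^sup>L M (\<lambda>x. (norm (f x))^2)) = (integral\<^sup>L M (\<lambda>x. (norm (g x))^2))"
    using a f g unfolding aeq_def by (intro integral_cong_AE) (auto simp: L2M_iff elim: AE_mp)
  then show ?thesis using f g by (simp add: fnorm_eq)
qed

lemma rip_cong_left: "f \<in> L2M M \<Longrightarrow> g \<in> L2M M \<Longrightarrow> h \<in> L2M M \<Longrightarrow> aeq M f g \<Longrightarrow> rip M f h = rip M g h"
  unfolding rip_def aeq_def
  by (intro integral_cong_AE) (auto simp: L2M_iff elim: AE_mp)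

lemma fnorm_zero_aeq: "f \<in> L2M M \<Longrightarrow> fnorm M f = 0 \<Longrightarrow> aeq M f (\<lambda>x. 0)"
proof -
  assume f: "f \<in> L2M M" and z: "fnorm M f = 0"
  then have "(integral\<^sup>L M (\<lambda>x. (norm (f x))^2)) = 0"
    by (simp add: fnorm_eq)
  then have "AE x in M. (norm (f x))^2 = 0"
    using f by (subst (asm) integral_nonneg_eq_0_iff_AE) (auto simp: L2M_iff)
  then show ?thesis unfolding aeq_def by (auto elim: AE_mp)
qed

lemma fnorm_diff_zero_aeq: "f \<in> L2M M \<Longrightarrow> g \<in> L2M M \<Longrightarrow> fnorm M (\<lambda>x. f x - g x) = 0 \<Longrightarrow> aeq M f g"
  using fnorm_zero_aeq[of "\<lambda>x. f x - g x" M] L2M_diff[of f M g] unfolding aeq_def by (auto elim: AE_mp)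

lemma aeq_refl: "aeq M f f" by (simp add: aeq_def)
lemma aeq_sym: "aeq M f g \<Longrightarrow> aeq M g f" by (auto simp: aeq_def elim: AE_mp)
lemma aeq_trans: "aeq M f g \<Longrightarrow> aeq M g h \<Longrightarrow> aeq M f h" by (auto simp: aeq_def elim: AE_mp)

lemma int_cprod:
  fixes a b :: "'g \<Rightarrow> complex"
  assumes am: "a \<in> borel_measurable M" and bm: "b \<in> borel_measurable M"
    and ai: "integrable M (\<lambda>x. (cmod (a x))^2)" and bi: "integrable M (\<lambda>x. (cmod (b x))^2)"
  shows "integrable M (\<lambda>x. a x * cnj (b x))"
proof (rule Bochner_Integration.integrable_bound)
  show "integrable M (\<lambda>x. (1 * (cmod (a x))^2 + (cmod (b x))^2 / 1) / 2)"
    using ai bi by (intro Bochner_Integration.integrable_divide Bochner_Integration.integrable_add Bochner_Integration.integrable_mult_right)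
  show "(\<lambda>x. a x * cnj (b x)) \<in> borel_measurable M"
  proof (intro borel_measurable_times am)
    show "(\<lambda>x. cnj (b x)) \<in> borel_measurable M"
      by (rule measurable_compose[OF bm], intro borel_measurable_continuous_onI continuous_intros)
  qed
  show "AE x in M. norm (a x * cnj (b x)) \<le> norm ((1 * (cmod (a x))^2 + (cmod (b x))^2 / 1) / 2)"
  proof (rule AE_I2)
    fix x
    have "norm (a x * cnj (b x)) = cmod (a x) * cmod (b x)" by (simp add: norm_mult)
    also have "\<dots> \<le> (1 * (cmod (a x))^2 + (cmod (b x))^2 / 1) / 2" by (rule amgm_t) simp
    also have "\<dots> \<le> norm ((1 * (cmod (a x))^2 + (cmod (b x))^2 / 1) / 2)" by simp
    finally show "norm (a x * cnj (b x)) \<le> norm ((1 * (cmod (a x))^2 + (cmod (b x))^2 / 1) / 2)" .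
  qed
qed

lemma L2M_comp:
  "f \<in> L2M M \<Longrightarrow> (\<lambda>x. f x $ i $ j) \<in> borel_measurable M \<and> integrable M (\<lambda>x. (cmod (f x $ i $ j))^2)"
  unfolding L2M_def by auto

lemma int_entry: "f \<in> L2M M \<Longrightarrow> g \<in> L2M M \<Longrightarrow> integrable M (\<lambda>x. f x $ i $ j * cnj (g x $ k $ j))"
  using L2M_comp[of f M i j] L2M_comp[of g M k j] by (intro int_cprod) auto

lemma int_row: "f \<in> L2M M \<Longrightarrow> g \<in> L2M M \<Longrightarrow> integrable M (\<lambda>x. \<Sum>j\<in>UNIV. f x $ i $ j * cnj (g x $ k $ j))"
  by (intro Bochner_Integration.integrable_sum int_entry)

lemma mip_entry: "mip M f g $ i $ k = integral\<^sup>L M (\<lambda>x. \<Sum>j\<in>UNIV. f x $ i $ j * cnj (g x $ k $ j))"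
  by (simp add: mip_def matrix_matrix_mult_def cadj_def)

lemma inner_mat: "inner (A::complex^'r^'s) B = (\<Sum>i\<in>UNIV. Re (\<Sum>j\<in>UNIV. A $ i $ j * cnj (B $ i $ j)))"
  by (simp add: inner_vec_def inner_complex_def Re_sum)

lemma Re_hip: "f \<in> L2M M \<Longrightarrow> g \<in> L2M M \<Longrightarrow> Re (hip M f g) = rip M f g"
proof -
  assume f: "f \<in> L2M M" and g: "g \<in> L2M M"
  have "rip M f g = integral\<^sup>L M (\<lambda>x. \<Sum>i\<in>UNIV. Re (\<Sum>j\<in>UNIV. f x $ i $ j * cnj (g x $ i $ j)))"
    unfolding rip_def inner_mat ..
  also have "\<dots> = (\<Sum>i\<in>UNIV. integral\<^sup>L M (\<lambda>x. Re (\<Sum>j\<in>UNIV. f x $ i $ j * cnj (g x $ i $ j))))"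
    by (intro Bochner_Integration.integral_sum integrable_Re int_row f g)
  also have "\<dots> = (\<Sum>i\<in>UNIV. Re (integral\<^sup>L M (\<lambda>x. \<Sum>j\<in>UNIV. f x $ i $ j * cnj (g x $ i $ j))))"
    by (intro sum.cong refl integral_Re int_row f g)
  also have "\<dots> = Re (hip M f g)"
    by (simp add: hip_def trace_def mip_entry Re_sum)
  finally show ?thesis by simp
qed

lemma mip_sum_left:
  assumes I: "finite I" and h: "\<And>l. l \<in> I \<Longrightarrow> h l \<in> L2M M" and g: "g \<in> L2M M"
  shows "mip M (\<lambda>x. \<Sum>l\<in>I. h l x) g = (\<Sum>l\<in>I. mip M (h l) g)"
proof -
  have "mip M (\<lambda>x. \<Sum>l\<in>I. h l x) g $ i $ k = (\<Sum>l\<in>I. mip M (h l) g) $ i $ k" for i k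
  proof -
    have "mip M (\<lambda>x. \<Sum>l\<in>I. h l x) g $ i $ k
        = integral\<^sup>L M (\<lambda>x. \<Sum>l\<in>I. \<Sum>j\<in>UNIV. h l x $ i $ j * cnj (g x $ k $ j))"
      unfolding mip_entry by (simp add: sum_distrib_right sum.swap[of _ UNIV I])
    also have "\<dots> = (\<Sum>l\<in>I. integral\<^sup>L M (\<lambda>x. \<Sum>j\<in>UNIV. h l x $ i $ j * cnj (g x $ k $ j)))"
      by (intro Bochner_Integration.integral_sum int_row h g)
    also have "\<dots> = (\<Sum>l\<in>I. mip M (h l) g) $ i $ k"
      by (simp add: mip_entry)
    finally show ?thesis .
  qed
  then show ?thesis by (simp add: vec_eq_iff)
qed

lemma mip_sum_right:
  assumes I: "finite I" and h: "\<And>l. l \<in> I \<Longrightarrow> h l \<in> L2M M" and g: "g \<in> L2M M"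
  shows "mip M g (\<lambda>x. \<Sum>l\<in>I. h l x) = (\<Sum>l\<in>I. mip M g (h l))"
proof -
  have "mip M g (\<lambda>x. \<Sum>l\<in>I. h l x) $ i $ k = (\<Sum>l\<in>I. mip M g (h l)) $ i $ k" for i k
  proof -
    have "mip M g (\<lambda>x. \<Sum>l\<in>I. h l x) $ i $ k
        = integral\<^sup>L M (\<lambda>x. \<Sum>l\<in>I. \<Sum>j\<in>UNIV. g x $ i $ j * cnj (h l x $ k $ j))"
      unfolding mip_entry by (simp add: sum_distrib_left sum.swap[of _ UNIV I])
    also have "\<dots> = (\<Sum>l\<in>I. integral\<^sup>L M (\<lambda>x. \<Sum>j\<in>UNIV. g x $ i $ j * cnj (h l x $ k $ j)))"
      by (intro Bochner_Integration.integral_sum int_row h g)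
    also have "\<dots> = (\<Sum>l\<in>I. mip M g (h l)) $ i $ k"
      by (simp add: mip_entry)
    finally show ?thesis .
  qed
  then show ?thesis by (simp add: vec_eq_iff)
qed

lemma aeq_sum: "finite I \<Longrightarrow> (\<And>i. i \<in> I \<Longrightarrow> aeq M (f i) (g i)) \<Longrightarrow>
   aeq M (\<lambda>x. \<Sum>i\<in>I. f i x) (\<lambda>x. \<Sum>i\<in>I. g i x)"
proof -
  assume I: "finite I" and h: "\<And>i. i \<in> I \<Longrightarrow> aeq M (f i) (g i)"
  have h': "AE x in M. f i x = g i x" if "i \<in> I" for i
    using h[OF that] unfolding aeq_def .
  have "AE x in M. \<forall>i\<in>I. f i x = g i x"
    by (rule AE_finite_allI[OF I h'])
  then show ?thesis
    unfolding aeq_def by (rule AE_mp) (intro AE_I2 impI sum.cong refl, blast)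
qed

lemma pow_on: "op_on M T \<Longrightarrow> op_on M (T ^^ i)"
proof (induction i)
  case 0 then show ?case by (simp add: op_on_def)
next
  case (Suc i)
  then show ?case unfolding op_on_def by auto
qed

lemma op_on_L2: "op_on M T \<Longrightarrow> f \<in> L2M M \<Longrightarrow> T f \<in> L2M M"
  by (simp add: op_on_def)

lemma op_on_aeq: "op_on M T \<Longrightarrow> f \<in> L2M M \<Longrightarrow> g \<in> L2M M \<Longrightarrow> aeq M f g \<Longrightarrow> aeq M (T f) (T g)"
  by (simp add: op_on_def)

lemma pow_linear:
  fixes T :: "('g \<Rightarrow> complex^'r^'s) \<Rightarrow> ('g \<Rightarrow> complex^'r^'s)" and M :: "'g measure"
  assumes on: "op_on M T" and lin: "op_linear M T"
  shows "op_linear M (T ^^ i)"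
proof (induction i)
  case 0 then show ?case by (simp add: op_linear_def aeq_def)
next
  case (Suc i)
  show ?case unfolding op_linear_def
  proof (intro allI impI)
    fix a :: complex and f g :: "'g \<Rightarrow> complex^'r^'s" assume f: "f \<in> L2M M" and g: "g \<in> L2M M"
    have oi: "op_on M (T ^^ i)" by (rule pow_on[OF on])
    have Tf: "(T ^^ i) f \<in> L2M M" and Tg: "(T ^^ i) g \<in> L2M M"
      using oi f g by (auto simp: op_on_def)
    have l1: "(T ^^ i) (\<lambda>x. cscale a (f x) + g x) \<in> L2M M"
      using oi L2M_lin[OF f g] by (auto simp: op_on_def)
    have l2: "(\<lambda>x. cscale a ((T ^^ i) f x) + (T ^^ i) g x) \<in> L2M M"
      by (rule L2M_lin[OF Tf Tg])
    have "aeq M ((T ^^ i) (\<lambda>x. cscale a (f x) + g x)) (\<lambda>x. cscale a ((T ^^ i) f x) + (T ^^ i) g x)"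
      using Suc.IH f g unfolding op_linear_def by blast
    then have "aeq M (T ((T ^^ i) (\<lambda>x. cscale a (f x) + g x))) (T (\<lambda>x. cscale a ((T ^^ i) f x) + (T ^^ i) g x))"
      by (rule op_on_aeq[OF on l1 l2])
    moreover have "aeq M (T (\<lambda>x. cscale a ((T ^^ i) f x) + (T ^^ i) g x)) (\<lambda>x. cscale a (T ((T ^^ i) f) x) + T ((T ^^ i) g) x)"
      using lin Tf Tg unfolding op_linear_def by blast
    ultimately show "aeq M ((T ^^ Suc i) (\<lambda>x. cscale a (f x) + g x)) (\<lambda>x. cscale a ((T ^^ Suc i) f x) + (T ^^ Suc i) g x)"
      by (simp add: aeq_trans)
  qed
qed

definition Ssum :: "nat \<Rightarrow> (('g \<Rightarrow> complex^'r^'s) \<Rightarrow> ('g \<Rightarrow> complex^'r^'s)) \<Rightarrow> ('g \<Rightarrow> complex^'r^'s) \<Rightarrow> ('g \<Rightarrow> complex^'r^'s)" where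
  "Ssum n T f = (\<lambda>x. \<Sum>i\<le>n. (T ^^ i) f x)"

lemma Ssum_L2: "op_on M T \<Longrightarrow> f \<in> L2M M \<Longrightarrow> Ssum n T f \<in> L2M M"
  unfolding Ssum_def by (intro L2M_sum op_on_L2[OF pow_on])

lemma Ssum_on: "op_on M (T::('g \<Rightarrow> complex^'r^'s) \<Rightarrow> ('g \<Rightarrow> complex^'r^'s)) \<Longrightarrow> op_on M (Ssum n T)"
  unfolding op_on_def
proof (intro conjI ballI impI)
  assume on: "(\<forall>f\<in>L2M M. T f \<in> L2M M) \<and> (\<forall>f\<in>L2M M. \<forall>g\<in>L2M M. aeq M f g \<longrightarrow> aeq M (T f) (T g))"
  then have on': "op_on M T" by (simp add: op_on_def)
  fix f :: "'g \<Rightarrow> complex^'r^'s" assume f: "f \<in> L2M M"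
  show "Ssum n T f \<in> L2M M" by (rule Ssum_L2[OF on' f])
  fix g :: "'g \<Rightarrow> complex^'r^'s" assume g: "g \<in> L2M M" and a: "aeq M f g"
  show "aeq M (Ssum n T f) (Ssum n T g)"
    unfolding Ssum_def
    by (intro aeq_sum finite_atMost op_on_aeq[OF pow_on[OF on'] f g a])
qed

lemma cscale_sum: "cscale a (\<Sum>i\<in>I. A i) = (\<Sum>i\<in>I. cscale a (A i))"
  by (simp add: cscale_def vec_eq_iff sum_distrib_left)

lemma Ssum_linear: "op_on M (T::('g \<Rightarrow> complex^'r^'s) \<Rightarrow> ('g \<Rightarrow> complex^'r^'s)) \<Longrightarrow> op_linear M T \<Longrightarrow> op_linear M (Ssum n T)"
  unfolding op_linear_def
proof (intro allI impI)
  assume on: "op_on M T" and lin: "\<forall>a f g. f \<in> L2M M \<longrightarrow> g \<in> L2M M \<longrightarrow>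
        aeq M (T (\<lambda>x. cscale a (f x) + g x)) (\<lambda>x. cscale a (T f x) + T g x)"
  then have lin': "op_linear M T" by (simp add: op_linear_def)
  fix a :: complex and f g :: "'g \<Rightarrow> complex^'r^'s" assume f: "f \<in> L2M M" and g: "g \<in> L2M M"
  have "aeq M (\<lambda>x. \<Sum>i\<le>n. (T ^^ i) (\<lambda>x. cscale a (f x) + g x) x)
              (\<lambda>x. \<Sum>i\<le>n. cscale a ((T ^^ i) f x) + (T ^^ i) g x)"
    using pow_linear[OF on lin'] f g unfolding op_linear_def
    by (intro aeq_sum finite_atMost) blast
  then show "aeq M (Ssum n T (\<lambda>x. cscale a (f x) + g x)) (\<lambda>x. cscale a (Ssum n T f x) + Ssum n T g x)"
    unfolding Ssum_def by (simp add: cscale_sum sum.distrib)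
qed

lemma fnorm_sum_le: "finite I \<Longrightarrow> (\<And>i. i \<in> I \<Longrightarrow> h i \<in> L2M M) \<Longrightarrow>
    fnorm M (\<lambda>x. \<Sum>i\<in>I. h i x) \<le> (\<Sum>i\<in>I. fnorm M (h i))"
proof (induction I rule: finite_induct)
  case empty
  then show ?case by (simp add: fnorm_def)
next
  case (insert a F)
  have "fnorm M (\<lambda>x. \<Sum>i\<in>insert a F. h i x) = fnorm M (\<lambda>x. h a x + (\<Sum>i\<in>F. h i x))"
    using insert.hyps by simp
  also have "\<dots> \<le> fnorm M (h a) + fnorm M (\<lambda>x. \<Sum>i\<in>F. h i x)"
    using insert.prems by (intro fnorm_add_le L2M_sum) auto
  also have "\<dots> \<le> fnorm M (h a) + (\<Sum>i\<in>F. fnorm M (h i))"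
    using insert.IH insert.prems by simp
  finally show ?case using insert.hyps by simp
qed

lemma pow_bound:
  assumes on: "op_on M T" and C: "C \<ge> 0" and b: "\<And>f. f \<in> L2M M \<Longrightarrow> fnorm M (T f) \<le> C * fnorm M f"
  shows "f \<in> L2M M \<Longrightarrow> fnorm M ((T ^^ i) f) \<le> C ^ i * fnorm M f"
proof (induction i)
  case 0 then show ?case by simp
next
  case (Suc i)
  have Ti: "(T ^^ i) f \<in> L2M M" using op_on_L2[OF pow_on[OF on] Suc.prems] .
  have "fnorm M ((T ^^ Suc i) f) = fnorm M (T ((T ^^ i) f))" by simp
  also have "\<dots> \<le> C * fnorm M ((T ^^ i) f)" by (rule b[OF Ti])
  also have "\<dots> \<le> C * (C ^ i * fnorm M f)" using Suc C by (intro mult_left_mono) auto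
  finally show ?case by simp
qed

lemma Ssum_bound:
  fixes T :: "('g \<Rightarrow> complex^'r^'s) \<Rightarrow> ('g \<Rightarrow> complex^'r^'s)" and M :: "'g measure"
  assumes on: "op_on M T" and bd: "op_bounded M T"
  obtains K where "K \<ge> 1" "\<And>f. f \<in> L2M M \<Longrightarrow> fnorm M (Ssum n T f) \<le> K * fnorm M f"
proof -
  obtain C0 where C0: "\<And>f. f \<in> L2M M \<Longrightarrow> fnorm M (T f) \<le> C0 * fnorm M f"
    using bd unfolding op_bounded_def by blast
  define C where "C = max C0 0"
  have C: "C \<ge> 0" by (simp add: C_def)
  have b: "fnorm M (T f) \<le> C * fnorm M f" if f: "f \<in> L2M M" for f
  proof -
    have "C0 * fnorm M f \<le> C * fnorm M f"
      using fnorm_nonneg[OF f] by (intro mult_right_mono) (auto simp: C_def)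
    then show ?thesis using C0[OF f] by linarith
  qed
  define K where "K = max 1 (\<Sum>i\<le>n. C ^ i)"
  show ?thesis
  proof (rule that[of K])
    show "K \<ge> 1" by (simp add: K_def)
    fix f :: "'g \<Rightarrow> complex^'r^'s" assume f: "f \<in> L2M M"
    have "fnorm M (Ssum n T f) \<le> (\<Sum>i\<le>n. fnorm M ((T ^^ i) f))"
      unfolding Ssum_def by (intro fnorm_sum_le finite_atMost op_on_L2[OF pow_on[OF on] f])
    also have "\<dots> \<le> (\<Sum>i\<le>n. C ^ i * fnorm M f)"
      by (intro sum_mono pow_bound[OF on C b f])
    also have "\<dots> = (\<Sum>i\<le>n. C ^ i) * fnorm M f" by (simp add: sum_distrib_right)
    also have "\<dots> \<le> K * fnorm M f"
      using fnorm_nonneg[OF f] by (intro mult_right_mono) (auto simp: K_def)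
    finally show "fnorm M (Ssum n T f) \<le> K * fnorm M f" .
  qed
qed

lemma Ssum_bounded: "op_on M T \<Longrightarrow> op_bounded M T \<Longrightarrow> op_bounded M (Ssum n T)"
  unfolding op_bounded_def[of M "Ssum n T"] by (metis Ssum_bound)

lemma pow_adj:
  assumes on: "op_on M T" and onV: "op_on M V"
    and adj: "\<And>f g. f \<in> L2M M \<Longrightarrow> g \<in> L2M M \<Longrightarrow> mip M (T f) g = mip M f (V g)"
  shows "f \<in> L2M M \<Longrightarrow> g \<in> L2M M \<Longrightarrow> mip M ((T ^^ i) f) g = mip M f ((V ^^ i) g)"
proof (induction i arbitrary: g)
  case 0 then show ?case by simp
next
  case (Suc i)
  have Ti: "(T ^^ i) f \<in> L2M M" using op_on_L2[OF pow_on[OF on] Suc.prems(1)] .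
  have Vg: "V g \<in> L2M M" using op_on_L2[OF onV Suc.prems(2)] .
  have "mip M ((T ^^ Suc i) f) g = mip M ((T ^^ i) f) (V g)"
    using adj[OF Ti Suc.prems(2)] by simp
  also have "\<dots> = mip M f ((V ^^ i) (V g))" by (rule Suc.IH[OF Suc.prems(1) Vg])
  also have "\<dots> = mip M f ((V ^^ Suc i) g)" by (simp only: funpow_Suc_right o_apply)
  finally show ?case .
qed

lemma Ssum_adjointable: "op_on M (T::('g \<Rightarrow> complex^'r^'s) \<Rightarrow> ('g \<Rightarrow> complex^'r^'s)) \<Longrightarrow> op_adjointable M T \<Longrightarrow> op_adjointable M (Ssum n T)"
proof -
  assume on: "op_on M T" and a: "op_adjointable M T"
  then obtain V where onV: "op_on M V"
    and adj: "\<And>f g. f \<in> L2M M \<Longrightarrow> g \<in> L2M M \<Longrightarrow> mip M (T f) g = mip M f (V g)"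
    unfolding op_adjointable_def by blast
  show ?thesis unfolding op_adjointable_def
  proof (intro exI conjI ballI)
    show "op_on M (Ssum n V)" by (rule Ssum_on[OF onV])
    fix f g :: "'g \<Rightarrow> complex^'r^'s" assume f: "f \<in> L2M M" and g: "g \<in> L2M M"
    have "mip M (Ssum n T f) g = (\<Sum>i\<le>n. mip M ((T ^^ i) f) g)"
      unfolding Ssum_def by (intro mip_sum_left finite_atMost op_on_L2[OF pow_on[OF on] f] g)
    also have "\<dots> = (\<Sum>i\<le>n. mip M f ((V ^^ i) g))"
      by (intro sum.cong refl pow_adj[OF on onV adj f g])
    also have "\<dots> = mip M f (Ssum n V g)"
      unfolding Ssum_def by (intro mip_sum_right[symmetric] finite_atMost op_on_L2[OF pow_on[OF onV] g] f)
    finally show "mip M (Ssum n T f) g = mip M f (Ssum n V g)" .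
  qed
qed

lemma pos_sym:
  assumes on: "op_on M T" and pos: "op_positive M T"
    and f: "f \<in> L2M M" and g: "g \<in> L2M M"
  shows "rip M (T f) g = rip M f (T g)"
proof -
  have "hip M (T f) g = hip M f (T g)" using pos f g unfolding op_positive_def by blast
  then have "Re (hip M (T f) g) = Re (hip M f (T g))" by simp
  then show ?thesis
    using Re_hip[OF op_on_L2[OF on f] g] Re_hip[OF f op_on_L2[OF on g]] by simp
qed

lemma pos_nonneg:
  assumes on: "op_on M T" and pos: "op_positive M T" and f: "f \<in> L2M M"
  shows "0 \<le> rip M (T f) f"
proof -
  have "0 \<le> Re (hip M (T f) f)" using pos f unfolding op_positive_def by blast
  then show ?thesis using Re_hip[OF op_on_L2[OF on f] f] by simp
qed

lemma pow_sym:
  assumes on: "op_on M T" and pos: "op_positive M T"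
  shows "u \<in> L2M M \<Longrightarrow> v \<in> L2M M \<Longrightarrow> rip M ((T ^^ k) u) v = rip M u ((T ^^ k) v)"
proof (induction k arbitrary: v)
  case 0 then show ?case by simp
next
  case (Suc k)
  have Tk: "(T ^^ k) u \<in> L2M M" using op_on_L2[OF pow_on[OF on] Suc.prems(1)] .
  have Tv: "T v \<in> L2M M" using op_on_L2[OF on Suc.prems(2)] .
  have "rip M ((T ^^ Suc k) u) v = rip M (T ((T ^^ k) u)) v" by simp
  also have "\<dots> = rip M ((T ^^ k) u) (T v)" by (rule pos_sym[OF on pos Tk Suc.prems(2)])
  also have "\<dots> = rip M u ((T ^^ k) (T v))" by (rule Suc.IH[OF Suc.prems(1) Tv])
  also have "\<dots> = rip M u ((T ^^ Suc k) v)" by (simp only: funpow_Suc_right o_apply)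
  finally show ?case .
qed

lemma pow_nonneg:
  assumes on: "op_on M T" and pos: "op_positive M T" and h: "h \<in> L2M M"
  shows "0 \<le> rip M ((T ^^ i) h) h"
proof (cases "even i")
  case True
  then obtain j where i: "i = j + j" by (metis evenE mult_2)
  have Tj: "(T ^^ j) h \<in> L2M M" using op_on_L2[OF pow_on[OF on] h] .
  have "rip M ((T ^^ i) h) h = rip M ((T ^^ j) ((T ^^ j) h)) h"
    unfolding i by (simp only: funpow_add o_apply)
  also have "\<dots> = rip M ((T ^^ j) h) ((T ^^ j) h)" by (rule pow_sym[OF on pos Tj h])
  also have "\<dots> = (fnorm M ((T ^^ j) h))^2" by (rule rip_self[OF Tj])
  finally show ?thesis by simp
next
  case False
  then obtain j where i: "i = j + Suc j" by (metis oddE add_Suc_right mult_2 Suc_eq_plus1)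
  have Tj: "(T ^^ j) h \<in> L2M M" using op_on_L2[OF pow_on[OF on] h] .
  have TTj: "T ((T ^^ j) h) \<in> L2M M" using op_on_L2[OF on Tj] .
  have "rip M ((T ^^ i) h) h = rip M ((T ^^ j) (T ((T ^^ j) h))) h"
    unfolding i by (simp only: funpow_add o_apply funpow.simps(2))
  also have "\<dots> = rip M (T ((T ^^ j) h)) ((T ^^ j) h)" by (rule pow_sym[OF on pos TTj h])
  finally show ?thesis using pos_nonneg[OF on pos Tj] by simp
qed

lemma rip_sum_left: "finite I \<Longrightarrow> (\<And>i. i \<in> I \<Longrightarrow> f i \<in> L2M M) \<Longrightarrow> g \<in> L2M M \<Longrightarrow>
   rip M (\<lambda>x. \<Sum>i\<in>I. f i x) g = (\<Sum>i\<in>I. rip M (f i) g)"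
  unfolding rip_def inner_sum_left
  by (intro Bochner_Integration.integral_sum int_inner) auto

lemma Ssum_pos:
  assumes on: "op_on M T" and pos: "op_positive M T" and h: "h \<in> L2M M"
  shows "(fnorm M h)^2 \<le> rip M (Ssum n T h) h"
proof -
  have "rip M (Ssum n T h) h = (\<Sum>i\<le>n. rip M ((T ^^ i) h) h)"
    unfolding Ssum_def by (intro rip_sum_left finite_atMost op_on_L2[OF pow_on[OF on] h] h)
  moreover have "rip M ((T ^^ 0) h) h \<le> (\<Sum>i\<le>n. rip M ((T ^^ i) h) h)"
    by (rule member_le_sum) (auto intro: pow_nonneg[OF on pos h])
  ultimately show ?thesis using rip_self[OF h] by simp
qed

lemma cscale_m1: "cscale (-1) A + B = B - (A::complex^'r^'s)"
  by (simp add: cscale_def vec_eq_iff)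

lemma Ssum_diff:
  assumes on: "op_on M T" and lin: "op_linear M T" and f: "f \<in> L2M M" and g: "g \<in> L2M M"
  shows "aeq M (Ssum n T (\<lambda>x. f x - g x)) (\<lambda>x. Ssum n T f x - Ssum n T g x)"
proof -
  have "aeq M (Ssum n T (\<lambda>x. cscale (-1) (g x) + f x)) (\<lambda>x. cscale (-1) (Ssum n T g x) + Ssum n T f x)"
    using Ssum_linear[OF on lin] g f unfolding op_linear_def by blast
  then show ?thesis by (simp add: cscale_m1)
qed

lemma rip_zero_left: "rip M (\<lambda>x. 0) h = 0"
  by (simp add: rip_def)

lemma Ssum_inj:
  assumes on: "op_on M T" and lin: "op_linear M T" and pos: "op_positive M T"
    and f: "f \<in> L2M M" and g: "g \<in> L2M M" and a: "aeq M (Ssum n T f) (Ssum n T g)"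
  shows "aeq M f g"
proof -
  define h where "h = (\<lambda>x. f x - g x)"
  have h: "h \<in> L2M M" unfolding h_def by (rule L2M_diff[OF f g])
  have Sh: "Ssum n T h \<in> L2M M" by (rule Ssum_L2[OF on h])
  have SfSg: "(\<lambda>x. Ssum n T f x - Ssum n T g x) \<in> L2M M"
    by (intro L2M_diff Ssum_L2[OF on] f g)
  have a1: "aeq M (Ssum n T h) (\<lambda>x. Ssum n T f x - Ssum n T g x)"
    unfolding h_def by (rule Ssum_diff[OF on lin f g])
  have a2: "aeq M (\<lambda>x. Ssum n T f x - Ssum n T g x) (\<lambda>x. 0)"
    using a unfolding aeq_def by (auto elim: AE_mp)
  have "rip M (Ssum n T h) h = rip M (\<lambda>x. 0) h"
    by (rule rip_cong_left[OF Sh L2M_zero h aeq_trans[OF a1 a2]])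
  then have "(fnorm M h)^2 \<le> 0" using Ssum_pos[OF on pos h, of n] by (simp add: rip_zero_left)
  then have "fnorm M h = 0" by simp
  then show ?thesis using fnorm_diff_zero_aeq[OF f g] unfolding h_def by simp
qed

lemma geo_sum_le:
  fixes q :: real assumes q: "0 < q" "q < 1" and Nm: "N \<le> m"
  shows "(\<Sum>k\<in>{N..<m}. q ^ k) \<le> q ^ N / (1 - q)"
proof -
  have "(1 - q) * (\<Sum>k\<in>{N..<m}. q ^ k) = q ^ N - q ^ m"
    using Nm
  proof (induction m)
    case 0 then show ?case by simp
  next
    case (Suc m)
    show ?case
    proof (cases "N = Suc m")
      case True then show ?thesis by simp
    next
      case False
      then have Nm': "N \<le> m" using Suc.prems by simp
      have "(\<Sum>k\<in>{N..<Suc m}. q ^ k) = (\<Sum>k\<in>{N..<m}. q ^ k) + q ^ m"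
        using Nm' by simp
      then have "(1 - q) * (\<Sum>k\<in>{N..<Suc m}. q ^ k) = (1 - q) * (\<Sum>k\<in>{N..<m}. q ^ k) + (q ^ m - q ^ Suc m)"
        by (simp add: algebra_simps)
      then show ?thesis using Suc.IH[OF Nm'] by simp
    qed
  qed
  moreover have "q ^ m \<ge> 0" using q by simp
  ultimately have "(1 - q) * (\<Sum>k\<in>{N..<m}. q ^ k) \<le> q ^ N" by linarith
  then show ?thesis using q by (simp add: field_simps)
qed

lemma cauchy_from_tail:
  fixes X :: "nat \<Rightarrow> 'a::real_normed_vector"
  assumes d: "\<And>N m. N \<le> m \<Longrightarrow> norm (X m - X N) \<le> b N" and b: "b \<longlonglongrightarrow> 0"
  shows "Cauchy X"
proof (rule CauchyI)
  fix e :: real assume e: "0 < e"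
  have "eventually (\<lambda>N. b N < e / 2) sequentially"
    using b e by (intro order_tendstoD) auto
  then obtain K where K: "b K < e / 2" by (auto simp: eventually_sequentially)
  show "\<exists>M. \<forall>m\<ge>M. \<forall>n\<ge>M. norm (X m - X n) < e"
  proof (intro exI allI impI)
    fix m n assume m: "K \<le> m" and n: "K \<le> n"
    have "norm (X m - X n) \<le> norm (X m - X K) + norm (X n - X K)"
      using norm_triangle_ineq4[of "X m - X K" "X n - X K"] by simp
    also have "\<dots> \<le> b K + b K" using d[OF m] d[OF n] by simp
    finally show "norm (X m - X n) < e" using K by simp
  qed
qed

lemma tendsto_geo_mult: "0 < (q::real) \<Longrightarrow> q < 1 \<Longrightarrow> (\<lambda>N. q ^ N * c) \<longlonglongrightarrow> 0"
proof -
  assume q: "0 < q" "q < 1"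
  have "(\<lambda>N. q ^ N) \<longlonglongrightarrow> 0" using q by (intro LIMSEQ_power_zero) simp
  then have "(\<lambda>N. q ^ N * c) \<longlonglongrightarrow> 0 * c" by (intro tendsto_mult tendsto_const)
  then show ?thesis by simp
qed

lemma L2_complete:
  fixes u :: "nat \<Rightarrow> 'g \<Rightarrow> complex^'r^'s" and M :: "'g measure"
  assumes u: "\<And>N. u N \<in> L2M M" and q: "0 < q" "q < 1"
    and d: "\<And>N. fnorm M (\<lambda>x. u (Suc N) x - u N x) \<le> B * q ^ N"
  shows "\<exists>v \<in> L2M M. (\<lambda>N. fnorm M (\<lambda>x. u N x - v x)) \<longlonglongrightarrow> 0"
proof -
  define D where "D N = (\<lambda>x. u (Suc N) x - u N x)" for N
  have DL: "D N \<in> L2M M" for N unfolding D_def by (intro L2M_diff u)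
  define h where "h N x = (norm (D N x))^2 / q^N" for N x
  have hm: "h N \<in> borel_measurable M" for N
  proof -
    have "D N \<in> borel_measurable M" using L2M_meas[OF DL] .
    then show ?thesis unfolding h_def by measurable
  qed
  have hnn: "0 \<le> h N x" for N x unfolding h_def using q by simp
  have hi: "integrable M (h N)" for N
    unfolding h_def by (intro Bochner_Integration.integrable_divide L2M_int DL)
  have B: "B \<ge> 0" using d[of 0] fnorm_nonneg[OF L2M_diff[OF u[of "Suc 0"] u[of 0]]] by simp
  have hle: "integral\<^sup>L M (h N) \<le> B^2 * q^N" for N
  proof -
    have "integral\<^sup>L M (h N) = (fnorm M (D N))^2 / q^N"
      unfolding h_def using fnorm_sq[OF DL] by simp
    also have "\<dots> \<le> (B * q^N)^2 / q^N"
      using d[of N] fnorm_nonneg[OF DL] q unfolding D_def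
      by (intro divide_right_mono power_mono) auto
    also have "\<dots> = B^2 * q^N" using q by (simp add: power2_eq_square field_simps)
    finally show ?thesis .
  qed
  have hinn: "0 \<le> integral\<^sup>L M (h N)" for N using hnn by (intro integral_nonneg_AE) auto
  have hsum: "summable (\<lambda>N. integral\<^sup>L M (h N))"
  proof (rule summable_comparison_test')
    show "summable (\<lambda>N. B^2 * q^N)" using q by (intro summable_mult summable_geometric) simp
    show "norm (integral\<^sup>L M (h N)) \<le> B^2 * q^N" for N using hle[of N] hinn[of N] by simp
  qed
  have AEs: "AE x in M. summable (\<lambda>N. h N x)"
  proof -
    have "(\<integral>\<^sup>+x. (\<Sum>N. ennreal (h N x)) \<partial>M) = (\<Sum>N. \<integral>\<^sup>+x. ennreal (h N x) \<partial>M)"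
      by (rule nn_integral_suminf) (use hm in measurable)
    also have "\<dots> = (\<Sum>N. ennreal (integral\<^sup>L M (h N)))"
      by (intro arg_cong[where f=suminf] ext nn_integral_eq_integral hi AE_I2 hnn)
    finally have "(\<integral>\<^sup>+x. (\<Sum>N. ennreal (h N x)) \<partial>M) \<noteq> \<infinity>"
      using ennreal_suminf_neq_top[OF hsum hinn] by simp
    then have "AE x in M. (\<Sum>N. ennreal (h N x)) \<noteq> \<infinity>"
      by (intro nn_integral_noteq_infinite) (use hm in measurable)
    then show ?thesis
      by (rule AE_mp) (intro AE_I2 impI summable_suminf_not_top hnn, simp)
  qed
  define H where "H x = (\<Sum>N. h N x)" for x
  have Hi: "integrable M H"
    unfolding H_def
  proof (rule integrable_suminf[OF hi])
    show "AE x in M. summable (\<lambda>N. norm (h N x))"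
      using AEs by (rule AE_mp) (intro AE_I2 impI, simp add: abs_of_nonneg hnn)
    show "summable (\<lambda>N. integral\<^sup>L M (\<lambda>x. norm (h N x)))"
      using hsum by (simp add: abs_of_nonneg hnn)
  qed
  define c where "c x = H x / (1 - q)" for x
  have ci: "integrable M c" unfolding c_def using Hi by (intro Bochner_Integration.integrable_divide)
  have key: "(norm (u m x - u N x))^2 \<le> q^N * c x" if sx: "summable (\<lambda>N. h N x)" and Nm: "N \<le> m" for x N m
  proof -
    have tel: "u m x - u N x = (\<Sum>k\<in>{N..<m}. D k x)"
      unfolding D_def using sum_Suc_diff'[OF Nm, of "\<lambda>k. u k x"] by simp
    have n1: "norm (u m x - u N x) \<le> (\<Sum>k\<in>{N..<m}. norm (D k x))"
      unfolding tel by (rule norm_sum)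
    define a where "a k = sqrt (q^k)" for k
    define b where "b k = norm (D k x) / sqrt (q^k)" for k
    have ab: "a k * b k = norm (D k x)" for k using q unfolding a_def b_def by simp
    have a2: "(a k)^2 = q^k" for k using q unfolding a_def by simp
    have b2: "(b k)^2 = h k x" for k using q unfolding b_def h_def by (simp add: power_divide)
    have "(\<Sum>k\<in>{N..<m}. norm (D k x))^2 = (\<Sum>k\<in>{N..<m}. a k * b k)^2" by (simp add: ab)
    also have "\<dots> \<le> (\<Sum>k\<in>{N..<m}. (a k)^2) * (\<Sum>k\<in>{N..<m}. (b k)^2)"
      by (rule Cauchy_Schwarz_ineq_sum)
    also have "\<dots> = (\<Sum>k\<in>{N..<m}. q^k) * (\<Sum>k\<in>{N..<m}. h k x)" by (simp add: a2 b2)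
    also have "\<dots> \<le> (q^N / (1 - q)) * H x"
    proof (rule mult_mono)
      show "(\<Sum>k\<in>{N..<m}. q^k) \<le> q^N / (1 - q)" by (rule geo_sum_le[OF q Nm])
      show "(\<Sum>k\<in>{N..<m}. h k x) \<le> H x" unfolding H_def
        by (rule sum_le_suminf[OF sx]) (auto intro: hnn)
      show "0 \<le> q^N / (1 - q)" using q by simp
      show "0 \<le> (\<Sum>k\<in>{N..<m}. h k x)" by (intro sum_nonneg hnn)
    qed
    also have "\<dots> = q^N * c x" by (simp add: c_def)
    finally have "(\<Sum>k\<in>{N..<m}. norm (D k x))^2 \<le> q^N * c x" .
    moreover have "(norm (u m x - u N x))^2 \<le> (\<Sum>k\<in>{N..<m}. norm (D k x))^2"
      using n1 by (intro power_mono) auto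
    ultimately show ?thesis by linarith
  qed
  have cnn: "summable (\<lambda>N. h N x) \<Longrightarrow> 0 \<le> c x" for x
    unfolding c_def H_def using q by (intro divide_nonneg_pos suminf_nonneg hnn) auto
  define v where "v x = lim (\<lambda>m. u m x)" for x
  have conv: "(\<lambda>m. u m x) \<longlonglongrightarrow> v x" if sx: "summable (\<lambda>N. h N x)" for x
  proof -
    have "Cauchy (\<lambda>m. u m x)"
    proof (rule cauchy_from_tail)
      show "norm (u m x - u N x) \<le> sqrt (q^N * c x)" if "N \<le> m" for N m
        using real_sqrt_le_mono[OF key[OF sx that]] by simp
      show "(\<lambda>N. sqrt (q^N * c x)) \<longlonglongrightarrow> 0"
        using tendsto_real_sqrt[OF tendsto_geo_mult[OF q, of "c x"]] by simp
    qed
    then show ?thesis unfolding v_def using Cauchy_convergent convergent_LIMSEQ_iff by blast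
  qed
  have vb: "(norm (v x - u N x))^2 \<le> q^N * c x" if sx: "summable (\<lambda>N. h N x)" for x N
  proof (rule LIMSEQ_le_const2)
    show "(\<lambda>m. (norm (u m x - u N x))^2) \<longlonglongrightarrow> (norm (v x - u N x))^2"
      by (intro tendsto_intros conv[OF sx])
    show "\<exists>K. \<forall>m\<ge>K. (norm (u m x - u N x))^2 \<le> q^N * c x"
      using key[OF sx] by blast
  qed
  have um: "u N \<in> borel_measurable M" for N using L2M_meas[OF u] .
  have vm: "v \<in> borel_measurable M"
    unfolding v_def by (rule borel_measurable_lim_metric[OF um])
  have iN: "integrable M (\<lambda>x. (norm (v x - u N x))^2)" for N
  proof (rule Bochner_Integration.integrable_bound)
    show "integrable M (\<lambda>x. q^N * c x)" using ci by (intro Bochner_Integration.integrable_mult_right)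
    show "(\<lambda>x. (norm (v x - u N x))^2) \<in> borel_measurable M" using vm um[of N] by measurable
    show "AE x in M. norm ((norm (v x - u N x))^2) \<le> norm (q^N * c x)"
      using AEs
    proof (rule AE_mp, intro AE_I2 impI)
      fix x assume sx: "summable (\<lambda>N. h N x)"
      have "(norm (v x - u N x))^2 \<le> \<bar>q^N * c x\<bar>"
        using vb[OF sx, of N] abs_ge_self[of "q^N * c x"] by linarith
      then show "norm ((norm (v x - u N x))^2) \<le> norm (q^N * c x)" by simp
    qed
  qed
  have vL: "v \<in> L2M M"
  proof -
    have "(\<lambda>x. v x - u 0 x) \<in> L2M M" unfolding L2M_iff using vm um[of 0] iN[of 0] by auto
    from L2M_add[OF this u[of 0]] show ?thesis by simp
  qed
  have fN: "fnorm M (\<lambda>x. u N x - v x) \<le> sqrt (q^N * integral\<^sup>L M c)" for N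
  proof -
    have "fnorm M (\<lambda>x. u N x - v x) = sqrt (integral\<^sup>L M (\<lambda>x. (norm (v x - u N x))^2))"
      using fnorm_eq[OF L2M_diff[OF u vL]] by (simp add: norm_minus_commute)
    also have "\<dots> \<le> sqrt (integral\<^sup>L M (\<lambda>x. q^N * c x))"
      by (intro real_sqrt_le_mono integral_mono_AE iN Bochner_Integration.integrable_mult_right ci)
         (use AEs in \<open>rule AE_mp, intro AE_I2 impI, use vb in auto\<close>)
    also have "\<dots> = sqrt (q^N * integral\<^sup>L M c)" by simp
    finally show ?thesis .
  qed
  have "(\<lambda>N. fnorm M (\<lambda>x. u N x - v x)) \<longlonglongrightarrow> 0"
  proof (rule tendsto_sandwich[of "\<lambda>N. 0" _ _ "\<lambda>N. sqrt (q^N * integral\<^sup>L M c)"])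
    show "\<forall>\<^sub>F N in sequentially. 0 \<le> fnorm M (\<lambda>x. u N x - v x)"
      using fnorm_nonneg[OF L2M_diff[OF u vL]] by simp
    show "\<forall>\<^sub>F N in sequentially. fnorm M (\<lambda>x. u N x - v x) \<le> sqrt (q^N * integral\<^sup>L M c)"
      using fN by simp
    show "(\<lambda>N. 0::real) \<longlonglongrightarrow> 0" by simp
    show "(\<lambda>N. sqrt (q^N * integral\<^sup>L M c)) \<longlonglongrightarrow> 0"
      using tendsto_real_sqrt[OF tendsto_geo_mult[OF q, of "integral\<^sup>L M c"]] by simp
  qed
  then show ?thesis using vL by blast
qed

lemma norm_diff_scale_sq:
  "(norm (a - t *\<^sub>R b))^2 = (norm a)^2 - 2 * t * inner a b + t^2 * (norm (b::'a::real_inner))^2"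
proof -
  have "(norm (a - t *\<^sub>R b))^2 = inner (a - t *\<^sub>R b) (a - t *\<^sub>R b)" by (simp only: power2_norm_eq_inner)
  also have "\<dots> = inner a a - 2 * t * inner a b + t^2 * inner b b"
    by (simp add: inner_diff_left inner_diff_right inner_commute[of b a] power2_eq_square algebra_simps)
  also have "\<dots> = (norm a)^2 - 2 * t * inner a b + t^2 * (norm b)^2" by (simp only: power2_norm_eq_inner)
  finally show ?thesis .
qed

lemma fnorm_sq_diff_scale:
  assumes a: "a \<in> L2M M" and b: "b \<in> L2M M"
  shows "(fnorm M (\<lambda>x. a x - t *\<^sub>R b x))^2 = (fnorm M a)^2 - 2 * t * rip M a b + t^2 * (fnorm M b)^2"
proof -
  have ab: "(\<lambda>x. a x - t *\<^sub>R b x) \<in> L2M M" by (intro L2M_diff L2M_scaleR a b)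
  have ia: "integrable M (\<lambda>x. (norm (a x))^2)" using L2M_int[OF a] .
  have ib: "integrable M (\<lambda>x. (norm (b x))^2)" using L2M_int[OF b] .
  have iab: "integrable M (\<lambda>x. inner (a x) (b x))" using int_inner[OF a b] .
  have "(fnorm M (\<lambda>x. a x - t *\<^sub>R b x))^2 = integral\<^sup>L M (\<lambda>x. (norm (a x - t *\<^sub>R b x))^2)"
    by (rule fnorm_sq[OF ab])
  also have "\<dots> = integral\<^sup>L M (\<lambda>x. ((norm (a x))^2 - (2 * t) * inner (a x) (b x)) + t^2 * (norm (b x))^2)"
    by (simp add: norm_diff_scale_sq)
  also have "\<dots> = (integral\<^sup>L M (\<lambda>x. (norm (a x))^2) - (2 * t) * integral\<^sup>L M (\<lambda>x. inner (a x) (b x)))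
                 + t^2 * integral\<^sup>L M (\<lambda>x. (norm (b x))^2)"
    using ia ib iab
    by (simp add: Bochner_Integration.integral_add Bochner_Integration.integral_diff
        Bochner_Integration.integrable_diff Bochner_Integration.integrable_mult_right)
  also have "\<dots> = (fnorm M a)^2 - 2 * t * rip M a b + t^2 * (fnorm M b)^2"
    by (simp add: fnorm_sq[OF a] fnorm_sq[OF b] rip_def)
  finally show ?thesis .
qed

lemma Ssum_surj:
  fixes T :: "('g \<Rightarrow> complex^'r^'s) \<Rightarrow> ('g \<Rightarrow> complex^'r^'s)" and M :: "'g measure"
  assumes on: "op_on M T" and lin: "op_linear M T" and pos: "op_positive M T" and bd: "op_bounded M T"
    and g: "g \<in> L2M M"
  shows "\<exists>f \<in> L2M M. aeq M (Ssum n T f) g"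
proof -
  obtain K where K1: "K \<ge> 1" and KS: "\<And>f. f \<in> L2M M \<Longrightarrow> fnorm M (Ssum n T f) \<le> K * fnorm M f"
    using Ssum_bound[OF on bd] by blast
  define S where "S = Ssum n T"
  have SL: "S f \<in> L2M M" if "f \<in> L2M M" for f unfolding S_def by (rule Ssum_L2[OF on that])
  have Slin: "op_linear M S" unfolding S_def by (rule Ssum_linear[OF on lin])
  define t where "t = 1 / K^2"
  have t: "0 < t" "t \<le> 1" using K1 by (auto simp: t_def)
  define q0 where "q0 = sqrt (1 - t)"
  define q where "q = max q0 (1/2)"
  have q0: "0 \<le> q0" "q0 < 1" using t by (auto simp: q0_def)
  have q: "0 < q" "q < 1" "q0 \<le> q" using q0 by (auto simp: q_def)
  define u where "u = rec_nat (\<lambda>x. 0) (\<lambda>N uN. (\<lambda>x. uN x + t *\<^sub>R (g x - S uN x)))"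
  have u0: "u 0 = (\<lambda>x. 0)" by (simp add: u_def)
  have uS: "u (Suc N) = (\<lambda>x. u N x + t *\<^sub>R (g x - S (u N) x))" for N by (simp add: u_def)
  have uL: "u N \<in> L2M M" for N
  proof (induction N)
    case 0 then show ?case by (simp add: u0 L2M_zero)
  next
    case (Suc N) then show ?case
      unfolding uS by (intro L2M_add L2M_scaleR L2M_diff g SL)
  qed
  define r where "r N = (\<lambda>x. g x - S (u N) x)" for N
  have rL: "r N \<in> L2M M" for N unfolding r_def by (intro L2M_diff g SL uL)
  have SrL: "S (r N) \<in> L2M M" for N by (rule SL[OF rL])
  have contr: "fnorm M (r (Suc N)) \<le> q0 * fnorm M (r N)" for N
  proof -
    have eqU: "u (Suc N) = (\<lambda>x. cscale (complex_of_real t) (r N x) + u N x)"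
      unfolding uS r_def by (simp add: cscale_of_real add.commute)
    have lin': "\<And>a f g. f \<in> L2M M \<Longrightarrow> g \<in> L2M M \<Longrightarrow>
        aeq M (S (\<lambda>x. cscale a (f x) + g x)) (\<lambda>x. cscale a (S f x) + S g x)"
      using Slin unfolding op_linear_def by blast
    have a1: "aeq M (S (u (Suc N))) (\<lambda>x. cscale (complex_of_real t) (S (r N) x) + S (u N) x)"
      unfolding eqU by (rule lin'[OF rL uL])
    have a2: "aeq M (r (Suc N)) (\<lambda>x. r N x - t *\<^sub>R S (r N) x)"
      using a1 unfolding aeq_def r_def
      by (rule AE_mp) (intro AE_I2 impI, simp add: cscale_of_real algebra_simps)
    have L3: "(\<lambda>x. r N x - t *\<^sub>R S (r N) x) \<in> L2M M" by (intro L2M_diff L2M_scaleR rL SrL)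
    have "(fnorm M (r (Suc N)))^2 = (fnorm M (\<lambda>x. r N x - t *\<^sub>R S (r N) x))^2"
      using fnorm_cong[OF rL L3 a2] by simp
    also have "\<dots> = (fnorm M (r N))^2 - 2 * t * rip M (r N) (S (r N)) + t^2 * (fnorm M (S (r N)))^2"
      by (rule fnorm_sq_diff_scale[OF rL SrL])
    also have "\<dots> \<le> (fnorm M (r N))^2 - 2 * t * (fnorm M (r N))^2 + t^2 * (K * fnorm M (r N))^2"
    proof -
      have "(fnorm M (r N))^2 \<le> rip M (r N) (S (r N))"
        using Ssum_pos[OF on pos rL[of N], of n] rip_sym[of M "r N" "S (r N)"] unfolding S_def by simp
      then have i1: "2 * t * (fnorm M (r N))^2 \<le> 2 * t * rip M (r N) (S (r N))"
        using t by simp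
      have "(fnorm M (S (r N)))^2 \<le> (K * fnorm M (r N))^2"
        using KS[OF rL[of N]] fnorm_nonneg[OF SrL[of N]] unfolding S_def by (intro power_mono) auto
      then have i2: "t^2 * (fnorm M (S (r N)))^2 \<le> t^2 * (K * fnorm M (r N))^2"
        by (intro mult_left_mono) auto
      show ?thesis using i1 i2 by linarith
    qed
    also have "\<dots> = (1 - t) * (fnorm M (r N))^2"
    proof -
      have tK: "t^2 * K^2 = t" using K1 by (simp add: t_def power2_eq_square)
      have "t^2 * (K * fnorm M (r N))^2 = (t^2 * K^2) * (fnorm M (r N))^2"
        by (simp add: power_mult_distrib)
      also have "\<dots> = t * (fnorm M (r N))^2" by (simp only: tK)
      finally show ?thesis by (simp add: algebra_simps)
    qed
    also have "\<dots> = (q0 * fnorm M (r N))^2"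
    proof -
      have "q0^2 = 1 - t" using t unfolding q0_def by simp
      then show ?thesis by (simp add: power_mult_distrib)
    qed
    finally have "(fnorm M (r (Suc N)))^2 \<le> (q0 * fnorm M (r N))^2" .
    then show ?thesis
    proof (rule power2_le_imp_le)
      show "0 \<le> q0 * fnorm M (r N)" using q0(1) fnorm_nonneg[OF rL[of N]] by (rule mult_nonneg_nonneg)
    qed
  qed
  have rN: "fnorm M (r N) \<le> q^N * fnorm M (r 0)" for N
  proof (induction N)
    case 0 then show ?case by simp
  next
    case (Suc N)
    have "fnorm M (r (Suc N)) \<le> q0 * fnorm M (r N)" by (rule contr)
    also have "\<dots> \<le> q * fnorm M (r N)" using q fnorm_nonneg[OF rL] by (intro mult_right_mono) auto
    also have "\<dots> \<le> q * (q^N * fnorm M (r 0))" using Suc q by (intro mult_left_mono) auto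
    finally show ?case by simp
  qed
  have ud: "fnorm M (\<lambda>x. u (Suc N) x - u N x) \<le> (t * fnorm M (r 0)) * q ^ N" for N
  proof -
    have "(\<lambda>x. u (Suc N) x - u N x) = (\<lambda>x. t *\<^sub>R r N x)" unfolding uS r_def by simp
    then have "fnorm M (\<lambda>x. u (Suc N) x - u N x) = t * fnorm M (r N)"
      using fnorm_scaleR[OF rL, of t] t by simp
    also have "\<dots> \<le> t * (q^N * fnorm M (r 0))" using rN t by (intro mult_left_mono) auto
    finally show ?thesis by (simp add: algebra_simps)
  qed
  obtain v where vL: "v \<in> L2M M" and vlim: "(\<lambda>N. fnorm M (\<lambda>x. u N x - v x)) \<longlonglongrightarrow> 0"
    using L2_complete[OF uL q(1) q(2) ud] by blast
  have SvL: "S v \<in> L2M M" by (rule SL[OF vL])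
  have bound: "fnorm M (\<lambda>x. S v x - g x) \<le> K * fnorm M (\<lambda>x. u N x - v x) + q^N * fnorm M (r 0)" for N
  proof -
    have d1L: "(\<lambda>x. S v x - S (u N) x) \<in> L2M M" by (intro L2M_diff SvL SL uL)
    have d2L: "(\<lambda>x. S (u N) x - g x) \<in> L2M M" by (intro L2M_diff g SL uL)
    have vuL: "(\<lambda>x. v x - u N x) \<in> L2M M" by (intro L2M_diff vL uL)
    have "fnorm M (\<lambda>x. S v x - g x) = fnorm M (\<lambda>x. (S v x - S (u N) x) + (S (u N) x - g x))" by simp
    also have "\<dots> \<le> fnorm M (\<lambda>x. S v x - S (u N) x) + fnorm M (\<lambda>x. S (u N) x - g x)"
      by (rule fnorm_add_le[OF d1L d2L])
    also have "fnorm M (\<lambda>x. S v x - S (u N) x) = fnorm M (S (\<lambda>x. v x - u N x))"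
      using fnorm_cong[OF SL[OF vuL] d1L] Ssum_diff[OF on lin vL uL, of n] unfolding S_def by simp
    also have "\<dots> \<le> K * fnorm M (\<lambda>x. v x - u N x)" unfolding S_def by (rule KS[OF vuL])
    also have "fnorm M (\<lambda>x. v x - u N x) = fnorm M (\<lambda>x. u N x - v x)" by (rule fnorm_diff_commute[OF vL uL])
    also have "fnorm M (\<lambda>x. S (u N) x - g x) = fnorm M (r N)"
      unfolding r_def by (rule fnorm_diff_commute[OF SL[OF uL] g])
    finally show ?thesis using rN[of N] by simp
  qed
  have "fnorm M (\<lambda>x. S v x - g x) \<le> 0"
  proof (rule LIMSEQ_le[of "\<lambda>N. fnorm M (\<lambda>x. S v x - g x)" _ "\<lambda>N. K * fnorm M (\<lambda>x. u N x - v x) + q^N * fnorm M (r 0)"])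
    show "(\<lambda>N. fnorm M (\<lambda>x. S v x - g x)) \<longlonglongrightarrow> fnorm M (\<lambda>x. S v x - g x)" by simp
    have "(\<lambda>N. K * fnorm M (\<lambda>x. u N x - v x) + q^N * fnorm M (r 0)) \<longlonglongrightarrow> K * 0 + 0"
      by (intro tendsto_add tendsto_mult tendsto_const vlim tendsto_geo_mult q)
    then show "(\<lambda>N. K * fnorm M (\<lambda>x. u N x - v x) + q^N * fnorm M (r 0)) \<longlonglongrightarrow> 0" by simp
    show "\<exists>N. \<forall>m\<ge>N. fnorm M (\<lambda>x. S v x - g x) \<le> K * fnorm M (\<lambda>x. u m x - v x) + q^m * fnorm M (r 0)"
      using bound by blast
  qed
  then have "fnorm M (\<lambda>x. S v x - g x) = 0"
    using fnorm_nonneg[OF L2M_diff[OF SvL g]] by simp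
  then have "aeq M (S v) g" by (rule fnorm_diff_zero_aeq[OF SvL g])
  then show ?thesis using vL unfolding S_def by blast
qed

theorem corollary3p2:
  fixes M :: "'g::{ab_group_add, metric_space} measure"
    and T :: "('g \<Rightarrow> complex^'r^'s) \<Rightarrow> ('g \<Rightarrow> complex^'r^'s)"
    and E :: "nat \<Rightarrow> ('g \<Rightarrow> complex^'r^'s)"
  assumes "lca_metrizable_sigma_compact TYPE('g)"
    and "haar_measure M"
    and "op_on M T" and "op_linear M T" and "op_bounded M T"
    and "op_positive M T" and "op_adjointable M T"
    and "mv_onb M E"
  shows "\<forall>n::nat. mv_riesz_basis M (\<lambda>k x. \<Sum>i\<le>n. (T ^^ i) (E k) x)"
proof
  fix n :: nat
  note on = assms(3) and lin = assms(4) and bd = assms(5) and pos = assms(6) and adj = assms(7)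
  have bij: "op_bij M (Ssum n T)"
    unfolding op_bij_def
  proof (intro conjI ballI impI)
    fix f g :: "'g \<Rightarrow> complex^'r^'s"
    assume f: "f \<in> L2M M" and g: "g \<in> L2M M" and a: "aeq M (Ssum n T f) (Ssum n T g)"
    show "aeq M f g" by (rule Ssum_inj[OF on lin pos f g a])
  next
    fix g :: "'g \<Rightarrow> complex^'r^'s" assume g: "g \<in> L2M M"
    show "\<exists>f\<in>L2M M. aeq M (Ssum n T f) g" by (rule Ssum_surj[OF on lin pos bd g])
  qed
  show "mv_riesz_basis M (\<lambda>k x. \<Sum>i\<le>n. (T ^^ i) (E k) x)"
    unfolding mv_riesz_basis_def
  proof (intro exI conjI allI)
    show "mv_onb M E" by (rule assms(8))
    show "op_on M (Ssum n T)" by (rule Ssum_on[OF on])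
    show "op_linear M (Ssum n T)" by (rule Ssum_linear[OF on lin])
    show "op_bounded M (Ssum n T)" by (rule Ssum_bounded[OF on bd])
    show "op_bij M (Ssum n T)" by (rule bij)
    show "op_adjointable M (Ssum n T)" by (rule Ssum_adjointable[OF on adj])
    fix k
    show "aeq M (\<lambda>x. \<Sum>i\<le>n. (T ^^ i) (E k) x) (Ssum n T (E k))"
      unfolding Ssum_def by (rule aeq_refl)
  qed
qed

end
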